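(* Let $\mathcal{M}=\mathbb{C}^{3\times 3}$. The coordinate functions of the polynomial maps $c_3$ and $c_4$ are contained in the $\mathbb{C}$-linear span (inside $\mathbb{C}[\mathcal{M}]$) of the coordinate functions of $\mathcal{P}_1:\mathcal{M}\to\bigwedge^3\mathcal{M}$, $A\mapsto I_3\wedge A\wedge A^2$.
   Context: $c_3:\mathbb{C}^{3\times 3}\to\mathrm{S}^3(\mathbb{C}^3)^\star$ (homogeneous cubic forms on $\mathbb{C}^3$) sends $A$ to the cubic form $\underline{x}\mapsto\det(\underline{x}\,|\,A\underline{x}\,|\,A^2\underline{x})$ (the $3\times 3$ matrix with columns $\underline{x},A\underline{x},A^2\underline{x}$). $c_4:\mathbb{C}^{3\times 3}\to\mathrm{S}^3(\mathbb{C}^3)$ (homogeneous cubic forms on row vectors) sends $A$ to the cubic form $\underline{x}^T\mapsto\det$ of the $3\times 3$ matrix with rows $\underline{x}^T,\underline{x}^TA,\underline{x}^TA^2$. Coordinate functions of $c_3,c_4$ are the coefficients of the monomials of these cubic forms, viewed as polynomial functions of $A$; coordinate functions of $\mathcal{P}_1$ are taken with respect to a basis of $\bigwedge^3\mathbb{C}^{3\times3}$ (e.g. the $3\times 3$ minors of the $9\times 3$ matrix whose columns are the entries of $I_3$, $A$, $A^2$). *)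

theory Defs
  imports "HOL-Analysis.Analysis" "HOL-Library.Numeral_Type"
begin

type_synonym mat3 = "complex ^ 3 ^ 3"
type_synonym vec3 = "complex ^ 3"

text \<open>c_3(A): the cubic form x |-> det(x | Ax | A^2 x) (columns x, Ax, A^2 x).
  In HOL-Analysis, M $ i $ j is row i, column j.\<close>
definition c3 :: "mat3 \<Rightarrow> vec3 \<Rightarrow> complex" where
  "c3 A x = det (\<chi> i j. (if j = 0 then x $ i
                          else if j = 1 then (A *v x) $ i
                          else ((A ** A) *v x) $ i))"

definition c4 :: "mat3 \<Rightarrow> vec3 \<Rightarrow> complex" where
  "c4 A x = det (\<chi> i j. (if i = 0 then x $ j
                          else if i = 1 then (x v* A) $ j
                          else (x v* (A ** A)) $ j))"

definition cubic_exps :: "(3 \<Rightarrow> nat) set" where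
  "cubic_exps = {e. (\<Sum>i\<in>UNIV. e i) = 3}"

definition monomial3 :: "(3 \<Rightarrow> nat) \<Rightarrow> vec3 \<Rightarrow> complex" where
  "monomial3 e x = (\<Prod>i\<in>UNIV. (x $ i) ^ e i)"

text \<open>c is the family of coordinate functions (monomial coefficients, as functions of A)
  of a polynomial map F from matrices to cubic forms.\<close>
definition is_coord_family ::
  "((3 \<Rightarrow> nat) \<Rightarrow> mat3 \<Rightarrow> complex) \<Rightarrow> (mat3 \<Rightarrow> vec3 \<Rightarrow> complex) \<Rightarrow> bool" where
  "is_coord_family c F \<longleftrightarrow>
     (\<forall>A x. F A x = (\<Sum>e\<in>cubic_exps. c e A * monomial3 e x))"

text \<open>The 9x3 matrix whose columns are the entries of I_3, A, A^2 (rows indexed by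
  matrix positions (i,j)); column k = 0,1,2.\<close>
definition P1_matrix_entry :: "mat3 \<Rightarrow> 3 \<times> 3 \<Rightarrow> 3 \<Rightarrow> complex" where
  "P1_matrix_entry A p k =
     (if k = 0 then (mat 1 :: mat3) $ fst p $ snd p
      else if k = 1 then A $ fst p $ snd p
      else (A ** A) $ fst p $ snd p)"

text \<open>Coordinate functions of P_1(A) = I_3 \<and> A \<and> A^2: the 3x3 minors of that 9x3 matrix,
  with rows selected by an injective map t (distinct positions t 0, t 1, t 2).\<close>
definition P1_coord :: "(3 \<Rightarrow> 3 \<times> 3) \<Rightarrow> mat3 \<Rightarrow> complex" where
  "P1_coord t A = det (\<chi> r k. P1_matrix_entry A (t r) k)"

definition in_P1_span :: "(mat3 \<Rightarrow> complex) \<Rightarrow> bool" where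
  "in_P1_span f \<longleftrightarrow>
     (\<exists>w :: (3 \<Rightarrow> 3 \<times> 3) \<Rightarrow> complex.
        \<forall>A. f A = (\<Sum>t\<in>{t. inj t}. w t * P1_coord t A))"

end

theory Submission imports Defs begin

definition rowv :: "mat3 \<Rightarrow> 3 \<times> 3 \<Rightarrow> vec3" where
  "rowv A p = (\<chi> k. P1_matrix_entry A p k)"

lemma det_expand:
  fixes a :: "3 \<Rightarrow> 3 \<Rightarrow> vec3" and x :: vec3
  shows "det (\<chi> i. \<Sum>j\<in>UNIV. x$j *s a i j) = (\<Sum>f\<in>UNIV. (\<Prod>r\<in>UNIV. x$(f r)) * det (\<chi> i. a i (f i)))"
proof -
  have "det (\<chi> i. \<Sum>j\<in>UNIV. x$j *s a i j) = (\<Sum>f\<in>{f. \<forall>i. f i \<in> UNIV}. det (\<chi> i. x$(f i) *s a i (f i)))"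
    by (rule det_linear_rows_sum) simp
  also have "\<dots> = (\<Sum>f\<in>UNIV. (\<Prod>r\<in>UNIV. x$(f r)) * det (\<chi> i. a i (f i)))"
    by (simp add: det_rows_mul)
  finally show ?thesis .
qed

lemma comp3: "(\<Sum>j\<in>UNIV. x$j *s rowv A (i,j)) $ k =
   (if k = 0 then x $ i else if k = 1 then (A *v x) $ i else ((A ** A) *v x) $ i)"
proof -
  have "(\<Sum>j\<in>UNIV. x$j *s rowv A (i,j)) $ k = (\<Sum>j\<in>UNIV. x$j * P1_matrix_entry A (i,j) k)"
    by (simp add: sum_component rowv_def)
  also have "\<dots> = (if k = 0 then x $ i else if k = 1 then (A *v x) $ i else ((A ** A) *v x) $ i)"
  proof (cases "k = 0")
    case True
    then show ?thesis by (simp add: P1_matrix_entry_def mat_def if_distrib[of "\<lambda>z. _ * z"] sum.delta cong: if_cong)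
  next
    case False
    then show ?thesis by (simp add: P1_matrix_entry_def matrix_vector_mult_def mult.commute)
  qed
  finally show ?thesis .
qed

lemma comp4: "(\<Sum>j\<in>UNIV. x$j *s rowv A (j,i)) $ k =
   (if k = 0 then x $ i else if k = 1 then (x v* A) $ i else (x v* (A ** A)) $ i)"
proof -
  have "(\<Sum>j\<in>UNIV. x$j *s rowv A (j,i)) $ k = (\<Sum>j\<in>UNIV. x$j * P1_matrix_entry A (j,i) k)"
    by (simp add: sum_component rowv_def)
  also have "\<dots> = (if k = 0 then x $ i else if k = 1 then (x v* A) $ i else (x v* (A ** A)) $ i)"
  proof (cases "k = 0")
    case True
    then show ?thesis by (simp add: P1_matrix_entry_def mat_def if_distrib[of "\<lambda>z. _ * z"] sum.delta cong: if_cong)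
  next
    case False
    then show ?thesis by (simp add: P1_matrix_entry_def vector_matrix_mult_def mult.commute)
  qed
  finally show ?thesis .
qed

lemma c3_expand: "c3 A x = (\<Sum>f\<in>UNIV. (\<Prod>r\<in>UNIV. x$(f r)) * P1_coord (\<lambda>r. (r, f r)) A)"
proof -
  have "(\<chi> i j. (if j = 0 then x $ i
                          else if j = 1 then (A *v x) $ i
                          else ((A ** A) *v x) $ i)) = (\<chi> i. \<Sum>j\<in>UNIV. x$j *s rowv A (i,j))"
    by (simp only: vec_eq_iff comp3 vec_lambda_beta) simp
  then have "c3 A x = det (\<chi> i. \<Sum>j\<in>UNIV. x$j *s rowv A (i,j))" by (simp add: c3_def)
  also have "\<dots> = (\<Sum>f\<in>UNIV. (\<Prod>r\<in>UNIV. x$(f r)) * det (\<chi> i. rowv A (i, f i)))"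
    by (rule det_expand)
  finally show ?thesis by (simp add: P1_coord_def rowv_def)
qed

lemma c4_expand: "c4 A x = (\<Sum>f\<in>UNIV. (\<Prod>r\<in>UNIV. x$(f r)) * P1_coord (\<lambda>r. (f r, r)) A)"
proof -
  define Q :: mat3 where "Q = (\<chi> i j. (if i = 0 then x $ j
                          else if i = 1 then (x v* A) $ j
                          else (x v* (A ** A)) $ j))"
  have eq: "transpose Q = (\<chi> i. \<Sum>j\<in>UNIV. x$j *s rowv A (j,i))"
    unfolding vec_eq_iff comp4 transpose_def Q_def vec_lambda_beta by simp
  have "c4 A x = det Q" by (simp add: c4_def Q_def)
  also have "\<dots> = det (transpose Q)" by (rule det_transpose[symmetric])
  also have "\<dots> = det (\<chi> i. \<Sum>j\<in>UNIV. x$j *s rowv A (j,i))" by (simp only: eq)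
  also have "\<dots> = (\<Sum>f\<in>UNIV. (\<Prod>r\<in>UNIV. x$(f r)) * det (\<chi> i. rowv A (f i, i)))"
    by (rule det_expand)
  finally show ?thesis by (simp add: P1_coord_def rowv_def)
qed

definition exps :: "(3 \<Rightarrow> 3) \<Rightarrow> (3 \<Rightarrow> nat)" where
  "exps f = (\<lambda>i. card {r. f r = i})"

lemma prod_exps: "(\<Prod>r\<in>UNIV. x$(f r)) = monomial3 (exps f) x"
proof -
  have "(\<Prod>r\<in>UNIV. x$(f r)) = (\<Prod>i\<in>UNIV. \<Prod>r\<in>{r. r \<in> UNIV \<and> f r = i}. x$(f r))"
    by (rule prod.group[symmetric]) auto
  also have "\<dots> = (\<Prod>i\<in>UNIV. (x$i) ^ card {r. f r = i})"
    by (rule prod.cong) auto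
  finally show ?thesis by (simp add: monomial3_def exps_def)
qed

lemma exps_in: "exps f \<in> cubic_exps"
proof -
  have "(\<Sum>i\<in>UNIV. \<Sum>r\<in>{r. r \<in> UNIV \<and> f r = i}. (1::nat)) = (\<Sum>r\<in>(UNIV::3 set). 1)"
    by (rule sum.group) auto
  then show ?thesis by (simp add: cubic_exps_def exps_def)
qed

lemma fin_cubic: "finite cubic_exps"
proof -
  have le: "e i \<le> 3" if "e \<in> cubic_exps" for e and i :: 3
  proof -
    have "e 1 + e 2 + e 3 = 3" using that by (simp add: cubic_exps_def sum_3)
    then show ?thesis using exhaust_3[of i] by auto
  qed
  have inj: "inj_on (\<lambda>e::3\<Rightarrow>nat. (e 1, e 2, e 3)) cubic_exps"
  proof (rule inj_onI)
    fix e e' :: "3 \<Rightarrow> nat" assume "(e 1, e 2, e 3) = (e' 1, e' 2, e' 3)"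
    then have h: "e 1 = e' 1" "e 2 = e' 2" "e 3 = e' 3" by simp_all
    show "e = e'"
    proof
      fix i :: 3
      show "e i = e' i" using exhaust_3[of i] h by auto
    qed
  qed
  have "(\<lambda>e::3\<Rightarrow>nat. (e 1, e 2, e 3)) ` cubic_exps \<subseteq> {..3::nat}\<times>{..3::nat}\<times>{..3::nat}"
    using le by auto
  then have "finite ((\<lambda>e::3\<Rightarrow>nat. (e 1, e 2, e 3)) ` cubic_exps)"
    by (rule finite_subset) simp
  then show ?thesis using inj by (rule finite_imageD)
qed

definition enc :: "(3 \<Rightarrow> nat) \<Rightarrow> nat" where "enc e = e 1 + 4 * e 2 + 16 * e 3"

lemma cubic_le: "e \<in> cubic_exps \<Longrightarrow> e i \<le> 3"
proof -
  assume "e \<in> cubic_exps"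
  then have "e 1 + e 2 + e 3 = 3" by (simp add: cubic_exps_def sum_3)
  then show ?thesis using exhaust_3[of i] by auto
qed

lemma mod4_l1: "(a::nat) \<le> 3 \<Longrightarrow> (a + 4*k) mod 4 = a" by simp
lemma mod4_l2: "(a::nat) \<le> 3 \<Longrightarrow> (a + 4*k) div 4 = k" by simp

lemma digits_eq: "(a::nat) \<le> 3 \<Longrightarrow> b \<le> 3 \<Longrightarrow> a + 4*b + 16*c = a' + 4*b' + 16*c' \<Longrightarrow> a' \<le> 3 \<Longrightarrow> b' \<le> 3 \<Longrightarrow> a = a' \<and> b = b' \<and> c = c'"
proof -
  assume h: "a \<le> 3" "b \<le> 3" "a + 4*b + 16*c = a' + 4*b' + 16*c'" "a' \<le> 3" "b' \<le> 3"
  have e: "a + 4*(b + 4*c) = a' + 4*(b' + 4*c')" using h(3) by simp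
  have "a = a'" using arg_cong[OF e, of "\<lambda>n. n mod 4"] h mod4_l1 by metis
  moreover have "b + 4*c = b' + 4*c'" using arg_cong[OF e, of "\<lambda>n. n div 4"] h mod4_l2 by metis
  moreover have "b = b'" using arg_cong[OF calculation(2), of "\<lambda>n. n mod 4"] h mod4_l1 by metis
  moreover have "c = c'" using arg_cong[OF calculation(2), of "\<lambda>n. n div 4"] h mod4_l2 by metis
  ultimately show ?thesis by simp
qed

lemma enc_inj: "inj_on enc cubic_exps"
proof (rule inj_onI)
  fix e e' assume a: "e \<in> cubic_exps" "e' \<in> cubic_exps" "enc e = enc e'"
  have h: "e 1 = e' 1 \<and> e 2 = e' 2 \<and> e 3 = e' 3"
    by (rule digits_eq) (use a cubic_le in \<open>simp_all add: enc_def\<close>)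
  show "e = e'"
  proof
    fix i :: 3
    show "e i = e' i" using exhaust_3[of i] h by auto
  qed
qed

lemma mono_enc: "monomial3 e (vector [t, t^4, t^16]) = t ^ enc e"
proof -
  have "monomial3 e (vector [t, t^4, t^16]) = t ^ e 1 * (t^4) ^ e 2 * (t^16) ^ e 3"
    unfolding monomial3_def UNIV_3 by (simp add: vector_3 mult.assoc)
  also have "\<dots> = t ^ enc e" by (simp add: enc_def power_add power_mult)
  finally show ?thesis .
qed

lemma enc_le: "e \<in> cubic_exps \<Longrightarrow> enc e \<le> 63"
  using cubic_le[of e 1] cubic_le[of e 2] cubic_le[of e 3] by (simp add: enc_def)

lemma indep:
  assumes h: "\<forall>x. (\<Sum>e\<in>cubic_exps. g e * monomial3 e x) = (0::complex)" and e0: "e0 \<in> cubic_exps"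
  shows "g e0 = 0"
proof -
  define c where "c i = (\<Sum>e\<in>{e. e \<in> cubic_exps \<and> enc e = i}. g e)" for i
  have "\<forall>t. (\<Sum>i\<le>63. c i * t^i) = 0"
  proof
    fix t :: complex
    have "(\<Sum>i\<le>63. c i * t^i) = (\<Sum>i\<le>63. \<Sum>e\<in>{e. e \<in> cubic_exps \<and> enc e = i}. g e * t ^ enc e)"
      by (auto simp: c_def sum_distrib_right intro!: sum.cong)
    also have "\<dots> = (\<Sum>e\<in>cubic_exps. g e * t ^ enc e)"
      by (rule sum.group) (auto simp: fin_cubic enc_le)
    also have "\<dots> = (\<Sum>e\<in>cubic_exps. g e * monomial3 e (vector [t, t^4, t^16]))"
      by (simp add: mono_enc)
    finally show "(\<Sum>i\<le>63. c i * t^i) = 0" using h by simp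
  qed
  then have "c (enc e0) = 0" using polyfun_eq_0[where n=63 and c=c] enc_le[OF e0] by blast
  moreover have "{e. e \<in> cubic_exps \<and> enc e = enc e0} = {e0}"
    using enc_inj e0 by (auto dest: inj_onD)
  ultimately show ?thesis by (simp add: c_def)
qed

lemma generic_exist:
  assumes rep: "\<And>A x. F A x = (\<Sum>f\<in>UNIV. (\<Prod>r\<in>UNIV. x$(f r)) * G f A)"
  shows "is_coord_family (\<lambda>e A. \<Sum>f\<in>{f. exps f = e}. G f A) F"
  unfolding is_coord_family_def
proof (intro allI)
  fix A x
  have "(\<Sum>e\<in>cubic_exps. (\<Sum>f\<in>{f. exps f = e}. G f A) * monomial3 e x)
      = (\<Sum>e\<in>cubic_exps. \<Sum>f\<in>{f. f \<in> UNIV \<and> exps f = e}. monomial3 (exps f) x * G f A)"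
    by (rule sum.cong) (auto simp: sum_distrib_right sum_distrib_left mult.commute intro!: sum.cong)
  also have "\<dots> = (\<Sum>f\<in>UNIV. monomial3 (exps f) x * G f A)"
    by (rule sum.group) (auto simp: fin_cubic exps_in)
  also have "\<dots> = F A x" by (simp add: rep prod_exps)
  finally show "F A x = (\<Sum>e\<in>cubic_exps. (\<Sum>f\<in>{f. exps f = e}. G f A) * monomial3 e x)" by simp
qed

lemma generic_unique:
  assumes rep: "\<And>A x. F A x = (\<Sum>f\<in>UNIV. (\<Prod>r\<in>UNIV. x$(f r)) * G f A)"
    and c: "is_coord_family c F" and e: "e \<in> cubic_exps"
  shows "c e A = (\<Sum>f\<in>{f. exps f = e}. G f A)"
proof -
  have d: "is_coord_family (\<lambda>e A. \<Sum>f\<in>{f. exps f = e}. G f A) F" by (rule generic_exist[OF rep])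
  have "\<forall>x. (\<Sum>e\<in>cubic_exps. (c e A - (\<Sum>f\<in>{f. exps f = e}. G f A)) * monomial3 e x) = 0"
  proof
    fix x
    have "(\<Sum>e\<in>cubic_exps. (c e A - (\<Sum>f\<in>{f. exps f = e}. G f A)) * monomial3 e x)
       = (\<Sum>e\<in>cubic_exps. c e A * monomial3 e x) - (\<Sum>e\<in>cubic_exps. (\<Sum>f\<in>{f. exps f = e}. G f A) * monomial3 e x)"
      by (simp add: left_diff_distrib sum_subtractf)
    also have "\<dots> = F A x - F A x"
      using c d unfolding is_coord_family_def by metis
    finally show "(\<Sum>e\<in>cubic_exps. (c e A - (\<Sum>f\<in>{f. exps f = e}. G f A)) * monomial3 e x) = 0" by simp
  qed
  from indep[OF this e] show ?thesis by simp
qed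

lemma span_lemma:
  assumes tinj: "\<And>f. inj (tc f)" and tcinj: "inj tc"
  shows "in_P1_span (\<lambda>A. \<Sum>f\<in>{f. exps f = e}. P1_coord (tc f) A)"
  unfolding in_P1_span_def
proof (intro exI allI)
  fix A
  define T where "T = tc ` {f. exps f = e}"
  have TS: "T \<subseteq> {t. inj t}" using tinj by (auto simp: T_def)
  have "(\<Sum>t\<in>{t. inj t}. (if t \<in> T then 1 else 0) * P1_coord t A) = (\<Sum>t\<in>T. (if t \<in> T then 1 else 0) * P1_coord t A)"
    by (rule sum.mono_neutral_right) (use TS in \<open>simp_all\<close>)
  also have "\<dots> = (\<Sum>t\<in>T. P1_coord t A)" by simp
  also have "\<dots> = (\<Sum>f\<in>{f. exps f = e}. P1_coord (tc f) A)"
    unfolding T_def by (rule sum.reindex_cong[OF inj_on_subset[OF tcinj]]) auto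
  finally show "(\<Sum>f\<in>{f. exps f = e}. P1_coord (tc f) A) = (\<Sum>t\<in>{t. inj t}. (if t \<in> T then 1 else 0) * P1_coord t A)" by simp
qed

theorem proposition4p3:
  shows "(\<exists>c. is_coord_family c c3) \<and> (\<exists>c. is_coord_family c c4) \<and>
    (\<forall>c. is_coord_family c c3 \<longrightarrow> (\<forall>e\<in>cubic_exps. in_P1_span (c e))) \<and>
    (\<forall>c. is_coord_family c c4 \<longrightarrow> (\<forall>e\<in>cubic_exps. in_P1_span (c e)))"
proof (intro conjI allI impI ballI)
  show "\<exists>c. is_coord_family c c3" using generic_exist[of c3 "\<lambda>f. P1_coord (\<lambda>r. (r, f r))", OF c3_expand] by blast
  show "\<exists>c. is_coord_family c c4" using generic_exist[of c4 "\<lambda>f. P1_coord (\<lambda>r. (f r, r))", OF c4_expand] by blast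
next
  fix c e assume c: "is_coord_family c c3" and e: "e \<in> cubic_exps"
  have "c e = (\<lambda>A. \<Sum>f\<in>{f. exps f = e}. P1_coord (\<lambda>r. (r, f r)) A)"
    using generic_unique[of c3 "\<lambda>f. P1_coord (\<lambda>r. (r, f r))", OF c3_expand c e] by blast
  moreover have "in_P1_span (\<lambda>A. \<Sum>f\<in>{f. exps f = e}. P1_coord (\<lambda>r. (r, f r)) A)"
    by (rule span_lemma) (rule injI, simp add: fun_eq_iff)+
  ultimately show "in_P1_span (c e)" by (simp only:)
next
  fix c e assume c: "is_coord_family c c4" and e: "e \<in> cubic_exps"
  have "c e = (\<lambda>A. \<Sum>f\<in>{f. exps f = e}. P1_coord (\<lambda>r. (f r, r)) A)"
    using generic_unique[of c4 "\<lambda>f. P1_coord (\<lambda>r. (f r, r))", OF c4_expand c e] by blast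
  moreover have "in_P1_span (\<lambda>A. \<Sum>f\<in>{f. exps f = e}. P1_coord (\<lambda>r. (f r, r)) A)"
    by (rule span_lemma) (rule injI, simp add: fun_eq_iff)+
  ultimately show "in_P1_span (c e)" by (simp only:)
qed
end
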